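(* Let $K\neq0$ and let $(\mathcal M,\rho)$ be a semimetric space such that, if $K>0$, $\rho(A,B)+\rho(B,C)+\rho(A,C)<2\pi/\sqrt K$ for every triple of distinct points $A,B,C\in\mathcal M$. If $(\mathcal M,\rho)$ satisfies the one-sided four point $\operatorname{cosq}_K$ condition, then $\rho$ satisfies the triangle inequality, i.e. $(\mathcal M,\rho)$ is a metric space.
   Context: A semimetric space is a set with a symmetric nonnegative distance $\rho$ with $\rho(P,Q)=0$ iff $P=Q$ (no triangle inequality assumed). Let $\kappa=\sqrt{|K|}$. For $A\neq P$, $B\neq Q$ (with $\rho(A,P),\rho(B,Q),\rho(A,B)<\pi/\sqrt K$ if $K>0$), put $x=\rho(A,P)$, $y=\rho(B,Q)$, $a=\rho(A,B)$, $b=\rho(P,Q)$, $d=\rho(P,B)$, $f=\rho(A,Q)$ (points may coincide across the two pairs, e.g. $B=A$); for $K>0$ $$\operatorname{cosq}_K(\overrightarrow{AP},\overrightarrow{BQ})=\frac{\cos\kappa b+\cos\kappa x\cos\kappa y}{\sin\kappa x\sin\kappa y}-\frac{(\cos\kappa x+\cos\kappa d)(\cos\kappa y+\cos\kappa f)}{(1+\cos\kappa a)\sin\kappa x\sin\kappa y},$$ and for $K<0$ $$\operatorname{cosq}_K(\overrightarrow{AP},\overrightarrow{BQ})=\frac{(\cosh\kappa x+\cosh\kappa d)(\cosh\kappa y+\cosh\kappa f)}{(1+\cosh\kappa a)\sinh\kappa x\sinh\kappa y}-\frac{\cosh\kappa b+\cosh\kappa x\cosh\kappa y}{\sinh\kappa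 x\sinh\kappa y}.$$ Upper/lower four point $\operatorname{cosq}_K$ condition: $\operatorname{cosq}_K\le1$ / $\ge-1$ for all such quadruples; one-sided: at least one holds. *)

theory Defs
  imports Complex_Main
begin

definition semimetric_space :: "'a set \<Rightarrow> ('a \<Rightarrow> 'a \<Rightarrow> real) \<Rightarrow> bool" where
  "semimetric_space M \<rho> \<longleftrightarrow>
     (\<forall>P\<in>M. \<forall>Q\<in>M. \<rho> P Q \<ge> 0 \<and> \<rho> P Q = \<rho> Q P \<and> (\<rho> P Q = 0 \<longleftrightarrow> P = Q))"

definition metric_triangle :: "'a set \<Rightarrow> ('a \<Rightarrow> 'a \<Rightarrow> real) \<Rightarrow> bool" where
  "metric_triangle M \<rho> \<longleftrightarrow> (\<forall>A\<in>M. \<forall>B\<in>M. \<forall>C\<in>M. \<rho> A C \<le> \<rho> A B + \<rho> B C)"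

definition cosq :: "real \<Rightarrow> ('a \<Rightarrow> 'a \<Rightarrow> real) \<Rightarrow> 'a \<Rightarrow> 'a \<Rightarrow> 'a \<Rightarrow> 'a \<Rightarrow> real" where
  "cosq K \<rho> A P B Q =
     (let \<kappa> = sqrt \<bar>K\<bar>; x = \<rho> A P; y = \<rho> B Q; a = \<rho> A B; b = \<rho> P Q; d = \<rho> P B; f = \<rho> A Q in
      if K > 0 then
        (cos (\<kappa>*b) + cos (\<kappa>*x) * cos (\<kappa>*y)) / (sin (\<kappa>*x) * sin (\<kappa>*y))
        - ((cos (\<kappa>*x) + cos (\<kappa>*d)) * (cos (\<kappa>*y) + cos (\<kappa>*f)))
          / ((1 + cos (\<kappa>*a)) * sin (\<kappa>*x) * sin (\<kappa>*y))
      else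
        ((cosh (\<kappa>*x) + cosh (\<kappa>*d)) * (cosh (\<kappa>*y) + cosh (\<kappa>*f)))
          / ((1 + cosh (\<kappa>*a)) * sinh (\<kappa>*x) * sinh (\<kappa>*y))
        - (cosh (\<kappa>*b) + cosh (\<kappa>*x) * cosh (\<kappa>*y)) / (sinh (\<kappa>*x) * sinh (\<kappa>*y)))"

definition admissible_quad :: "real \<Rightarrow> 'a set \<Rightarrow> ('a \<Rightarrow> 'a \<Rightarrow> real) \<Rightarrow> 'a \<Rightarrow> 'a \<Rightarrow> 'a \<Rightarrow> 'a \<Rightarrow> bool" where
  "admissible_quad K M \<rho> A P B Q \<longleftrightarrow>
     A \<in> M \<and> P \<in> M \<and> B \<in> M \<and> Q \<in> M \<and> A \<noteq> P \<and> B \<noteq> Q \<and>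
     (K > 0 \<longrightarrow> \<rho> A P < pi / sqrt K \<and> \<rho> B Q < pi / sqrt K \<and> \<rho> A B < pi / sqrt K)"

definition upper_cosq_condition :: "real \<Rightarrow> 'a set \<Rightarrow> ('a \<Rightarrow> 'a \<Rightarrow> real) \<Rightarrow> bool" where
  "upper_cosq_condition K M \<rho> \<longleftrightarrow>
     (\<forall>A P B Q. admissible_quad K M \<rho> A P B Q \<longrightarrow> cosq K \<rho> A P B Q \<le> 1)"

definition lower_cosq_condition :: "real \<Rightarrow> 'a set \<Rightarrow> ('a \<Rightarrow> 'a \<Rightarrow> real) \<Rightarrow> bool" where
  "lower_cosq_condition K M \<rho> \<longleftrightarrow>
     (\<forall>A P B Q. admissible_quad K M \<rho> A P B Q \<longrightarrow> cosq K \<rho> A P B Q \<ge> -1)"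

definition one_sided_cosq_condition :: "real \<Rightarrow> 'a set \<Rightarrow> ('a \<Rightarrow> 'a \<Rightarrow> real) \<Rightarrow> bool" where
  "one_sided_cosq_condition K M \<rho> \<longleftrightarrow>
     upper_cosq_condition K M \<rho> \<or> lower_cosq_condition K M \<rho>"

end

theory Submission
  imports Defs
begin

lemma pos_lower:
  fixes X Y Z :: real
  assumes "0 < X" "X < pi" "0 < Y" "Y < pi"
    and "(cos Z + cos X * cos Y) / (sin X * sin Y)
        - ((cos X + cos X) * (cos Y + cos Y)) / ((1 + cos 0) * sin X * sin Y) \<ge> -1"
  shows "cos Z \<ge> cos (X + Y)"
proof -
  have s: "sin X * sin Y > 0" using assms sin_gt_zero by auto
  have "(cos Z + cos X * cos Y) / (sin X * sin Y)
        - ((cos X + cos X) * (cos Y + cos Y)) / ((1 + cos 0) * sin X * sin Y)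
        = (cos Z - cos X * cos Y) / (sin X * sin Y)"
    using s by (simp add: field_simps) (simp add: divide_simps ring_distribs)
  with assms(5) have "(cos Z - cos X * cos Y) / (sin X * sin Y) \<ge> -1" by simp
  then have "cos Z - cos X * cos Y \<ge> - (sin X * sin Y)" using s by (simp add: field_simps)
  then show ?thesis by (simp add: cos_add)
qed

lemma pos_upper:
  fixes X Y Z :: real
  assumes "0 < X" "X < pi" "0 < Y" "Y < pi"
    and "(cos Y + cos X * cos Y) / (sin X * sin Y)
        - ((cos X + cos 0) * (cos Y + cos Z)) / ((1 + cos X) * sin X * sin Y) \<le> 1"
  shows "cos Z \<ge> cos (X + Y)"
proof -
  have s: "sin X * sin Y > 0" using assms sin_gt_zero by auto
  have c: "1 + cos X > 0"
  proof -
    have "cos X > cos pi" using assms by (intro cos_monotone_0_pi) auto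
    then show ?thesis by simp
  qed
  have "(cos Y + cos X * cos Y) / (sin X * sin Y)
        - ((cos X + cos 0) * (cos Y + cos Z)) / ((1 + cos X) * sin X * sin Y)
        = (cos X * cos Y - cos Z) / (sin X * sin Y)"
    proof -
    have "((cos X + cos 0) * (cos Y + cos Z)) / ((1 + cos X) * sin X * sin Y)
          = (cos Y + cos Z) / (sin X * sin Y)"
      using c by (simp add: add.commute mult.assoc)
    then show ?thesis by (simp add: diff_divide_distrib add_divide_distrib algebra_simps)
  qed
  with assms(5) have "(cos X * cos Y - cos Z) / (sin X * sin Y) \<le> 1" by simp
  then have "cos X * cos Y - cos Z \<le> sin X * sin Y" using s by (simp add: field_simps)
  then show ?thesis by (simp add: cos_add)
qed

lemma neg_lower:
  fixes X Y Z :: real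
  assumes "0 < X" "0 < Y"
    and "((cosh X + cosh X) * (cosh Y + cosh Y)) / ((1 + cosh 0) * sinh X * sinh Y)
        - (cosh Z + cosh X * cosh Y) / (sinh X * sinh Y) \<ge> -1"
  shows "cosh Z \<le> cosh (X + Y)"
proof -
  have s: "sinh X * sinh Y > 0" using assms by auto
  have "((cosh X + cosh X) * (cosh Y + cosh Y)) / ((1 + cosh 0) * sinh X * sinh Y)
        - (cosh Z + cosh X * cosh Y) / (sinh X * sinh Y)
        = (cosh X * cosh Y - cosh Z) / (sinh X * sinh Y)"
    using s by (simp add: divide_simps ring_distribs)
  with assms(3) have "(cosh X * cosh Y - cosh Z) / (sinh X * sinh Y) \<ge> -1" by simp
  then have "cosh X * cosh Y - cosh Z \<ge> - (sinh X * sinh Y)" using s by (simp add: field_simps)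
  then show ?thesis by (simp add: cosh_add)
qed

lemma neg_upper:
  fixes X Y Z :: real
  assumes "0 < X" "0 < Y"
    and "((cosh X + cosh 0) * (cosh Y + cosh Z)) / ((1 + cosh X) * sinh X * sinh Y)
        - (cosh Y + cosh X * cosh Y) / (sinh X * sinh Y) \<le> 1"
  shows "cosh Z \<le> cosh (X + Y)"
proof -
  have s: "sinh X * sinh Y > 0" using assms by auto
  have c: "1 + cosh X > 0" using cosh_real_ge_1[of X] by simp
  have "((cosh X + cosh 0) * (cosh Y + cosh Z)) / ((1 + cosh X) * sinh X * sinh Y)
        - (cosh Y + cosh X * cosh Y) / (sinh X * sinh Y)
        = (cosh Z - cosh X * cosh Y) / (sinh X * sinh Y)"
    proof -
    have "((cosh X + cosh 0) * (cosh Y + cosh Z)) / ((1 + cosh X) * sinh X * sinh Y)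
          = (cosh Y + cosh Z) / (sinh X * sinh Y)"
      using c by (simp add: add.commute mult.assoc)
    then show ?thesis by (simp add: diff_divide_distrib add_divide_distrib algebra_simps)
  qed
  with assms(3) have "(cosh Z - cosh X * cosh Y) / (sinh X * sinh Y) \<le> 1" by simp
  then have "cosh Z - cosh X * cosh Y \<le> sinh X * sinh Y" using s by (simp add: field_simps)
  then show ?thesis by (simp add: cosh_add)
qed

lemma cos_contra:
  fixes S T :: real
  assumes "0 \<le> S" "S < T" "T < 2 * pi - S" "S < pi"
  shows "cos T < cos S"
proof (cases "T \<le> pi")
  case True then show ?thesis using assms by (intro cos_monotone_0_pi) auto
next
  case False
  have "cos (2 * pi - T) < cos S" using assms False by (intro cos_monotone_0_pi) auto
  then show ?thesis by simp
qed

theorem mainTheorem16: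
  fixes K :: real and M :: "'a set" and \<rho> :: "'a \<Rightarrow> 'a \<Rightarrow> real"
  assumes "K \<noteq> 0"
    and "semimetric_space M \<rho>"
    and "K > 0 \<Longrightarrow> \<forall>A\<in>M. \<forall>B\<in>M. \<forall>C\<in>M. A \<noteq> B \<and> B \<noteq> C \<and> A \<noteq> C \<longrightarrow>
            \<rho> A B + \<rho> B C + \<rho> A C < 2 * pi / sqrt K"
    and "one_sided_cosq_condition K M \<rho>"
  shows "metric_triangle M \<rho>"
  unfolding metric_triangle_def
proof (intro ballI)
  fix A B C assume AM: "A \<in> M" and BM: "B \<in> M" and CM: "C \<in> M"
  note sm = assms(2)[unfolded semimetric_space_def]
  have sym: "\<rho> P Q = \<rho> Q P" if "P \<in> M" "Q \<in> M" for P Q using sm that by blast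
  have z: "\<rho> P P = 0" if "P \<in> M" for P using sm that by blast
  have pos: "\<rho> P Q > 0" if "P \<in> M" "Q \<in> M" "P \<noteq> Q" for P Q
    using sm that by (metis less_eq_real_def)
  show "\<rho> A C \<le> \<rho> A B + \<rho> B C"
  proof (cases "A = B \<or> B = C \<or> A = C")
    case True
    then show ?thesis
      using z AM BM CM pos by (metis add.commute add_0 add_increasing le_less)
  next
    case False
    hence ne: "A \<noteq> B" "B \<noteq> C" "A \<noteq> C" by auto
    define x where "x = \<rho> A B"
    define y where "y = \<rho> B C"
    define b where "b = \<rho> A C"
    have xp: "x > 0" "y > 0" "b > 0" using pos ne AM BM CM x_def y_def b_def by auto
    show ?thesis
    proof (rule ccontr)
      assume "\<not> ?thesis"
      hence lt: "x + y < b" by (simp add: x_def y_def b_def)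
      define k where "k = sqrt \<bar>K\<bar>"
      have kp: "k > 0" using assms(1) k_def by simp
      have BA: "\<rho> B A = x" using sym AM BM x_def by simp
      have AB: "\<rho> A B = x" using x_def by simp
      have BB: "\<rho> B B = 0" using z BM by simp
      show False
      proof (cases "K > 0")
        case Kp: True
        have kK: "k = sqrt K" using Kp k_def by simp
        have per: "x + y + b < 2 * pi / k"
          using assms(3)[OF Kp] AM BM CM ne kK x_def y_def b_def by auto
        hence per': "k * x + k * y + k * b < 2 * pi" using kp
          by (simp add: field_simps)
        have kxy: "k * x + k * y < k * b"
          using mult_strict_left_mono[OF lt kp] by (simp add: distrib_left)
        have sxy: "k * x + k * y < pi" using kxy per' by linarith
        have kx: "k * x > 0" "k * y > 0" using kp xp by auto
        have xpi: "x < pi / sqrt K" "y < pi / sqrt K" using sxy kx kp kK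
          by (simp_all add: field_simps)
        have key: "cos (k * b) \<ge> cos (k * x + k * y)"
          using assms(4)[unfolded one_sided_cosq_condition_def]
        proof
          assume U: "upper_cosq_condition K M \<rho>"
          have "admissible_quad K M \<rho> A B B C"
            unfolding admissible_quad_def using AM BM CM ne xpi x_def y_def by auto
          hence "cosq K \<rho> A B B C \<le> 1" using U unfolding upper_cosq_condition_def by blast
          hence "(cos (k*y) + cos (k*x) * cos (k*y)) / (sin (k*x) * sin (k*y))
        - ((cos (k*x) + cos (k*0)) * (cos (k*y) + cos (k*b))) / ((1 + cos (k*x)) * sin (k*x) * sin (k*y)) \<le> 1"
            unfolding cosq_def Let_def using Kp BB
            by (simp add: kK k_def[symmetric] x_def[symmetric] y_def[symmetric] b_def[symmetric])
          then show ?thesis using pos_upper[of "k*x" "k*y" "k*b"] kx sxy by simp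
        next
          assume L: "lower_cosq_condition K M \<rho>"
          have "admissible_quad K M \<rho> B A B C"
            unfolding admissible_quad_def using AM BM CM ne xpi BA y_def kK BB Kp by auto
          hence "cosq K \<rho> B A B C \<ge> -1" using L unfolding lower_cosq_condition_def by blast
          hence "(cos (k*b) + cos (k*x) * cos (k*y)) / (sin (k*x) * sin (k*y))
        - ((cos (k*x) + cos (k*x)) * (cos (k*y) + cos (k*y))) / ((1 + cos (k*0)) * sin (k*x) * sin (k*y)) \<ge> -1"
            unfolding cosq_def Let_def using Kp BB BA AB
            by (simp add: kK k_def[symmetric] x_def[symmetric] y_def[symmetric] b_def[symmetric])
          then show ?thesis using pos_lower[of "k*x" "k*y" "k*b"] kx sxy by simp
        qed
        have "cos (k * b) < cos (k * x + k * y)"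
          using kx sxy per' kxy by (intro cos_contra) (auto simp: algebra_simps)
        then show False using key by simp
      next
        case Kn: False
        have kK: "k = sqrt (- K)" using Kn k_def by simp
        have key: "cosh (k * b) \<le> cosh (k * x + k * y)"
          using assms(4)[unfolded one_sided_cosq_condition_def]
        proof
          assume U: "upper_cosq_condition K M \<rho>"
          have "admissible_quad K M \<rho> A B B C"
            unfolding admissible_quad_def using AM BM CM ne Kn by auto
          hence "cosq K \<rho> A B B C \<le> 1" using U unfolding upper_cosq_condition_def by blast
          hence "((cosh (k*x) + cosh (k*0)) * (cosh (k*y) + cosh (k*b))) / ((1 + cosh (k*x)) * sinh (k*x) * sinh (k*y))
        - (cosh (k*y) + cosh (k*x) * cosh (k*y)) / (sinh (k*x) * sinh (k*y)) \<le> 1"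
            unfolding cosq_def Let_def using Kn BB
            by (simp add: kK k_def[symmetric] x_def[symmetric] y_def[symmetric] b_def[symmetric])
          then show ?thesis using neg_upper[of "k*x" "k*y" "k*b"] kp xp by simp
        next
          assume L: "lower_cosq_condition K M \<rho>"
          have "admissible_quad K M \<rho> B A B C"
            unfolding admissible_quad_def using AM BM CM ne Kn by auto
          hence "cosq K \<rho> B A B C \<ge> -1" using L unfolding lower_cosq_condition_def by blast
          hence "((cosh (k*x) + cosh (k*x)) * (cosh (k*y) + cosh (k*y))) / ((1 + cosh (k*0)) * sinh (k*x) * sinh (k*y))
        - (cosh (k*b) + cosh (k*x) * cosh (k*y)) / (sinh (k*x) * sinh (k*y)) \<ge> -1"
            unfolding cosq_def Let_def using Kn BB BA AB
            by (simp add: kK k_def[symmetric] x_def[symmetric] y_def[symmetric] b_def[symmetric])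
          then show ?thesis using neg_lower[of "k*x" "k*y" "k*b"] kp xp by simp
        qed
        have "cosh (k * x + k * y) < cosh (k * b)"
          using kp xp mult_strict_left_mono[OF lt kp]
          by (subst cosh_real_nonneg_less_iff) (auto simp: distrib_left)
        then show False using key by simp
      qed
    qed
  qed
qed

end
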